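(* $\mathscr X$ is a compact subset of $C[0,1]$ with respect to the topology of uniform convergence.
   Context: The Faber--Schauder functions are $e_{0,0}(t):=(\min\{t,1-t\})^+$ and $e_{m,k}(t):=2^{-m/2}e_{0,0}(2^m t-k)$ for $t\in\mathbb R$, $m\ge1$, $k\in\mathbb Z$. $\mathscr X$ denotes the set of all functions $x\in C[0,1]$ of the form $x=\sum_{m=0}^\infty\sum_{k=0}^{2^m-1}\theta_{m,k}e_{m,k}$ (uniformly convergent series) with $\theta_{m,k}\in\{-1,+1\}$. *)

theory Defs
  imports "HOL-Analysis.Analysis"
begin

definition e00 :: "real \<Rightarrow> real" where
  "e00 t = max (min t (1 - t)) 0"

definition fs :: "nat \<Rightarrow> int \<Rightarrow> real \<Rightarrow> real" where
  "fs m k t = 2 powr (- real m / 2) * e00 (2 ^ m * t - real_of_int k)"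

text \<open>The space C[0,1] with the uniform (sup) metric: continuous functions on
  [0,1], represented extensionally (undefined outside [0,1]).\<close>
definition C01 :: "(real \<Rightarrow> real) metric" where
  "C01 = cfunspace (top_of_set {0..1}) euclidean_metric"

definition scrX :: "(real \<Rightarrow> real) set" where
  "scrX = {x. x \<in> extensional {0..1} \<and> continuous_on {0..1} x \<and>
     (\<exists>\<theta> :: nat \<Rightarrow> int \<Rightarrow> real.
        (\<forall>m k. 0 \<le> k \<and> k < 2 ^ m \<longrightarrow> \<theta> m k \<in> {-1, 1}) \<and>
        uniform_limit {0..1}
          (\<lambda>n t. \<Sum>m<n. \<Sum>k\<in>{0..<2 ^ m}. \<theta> m k * fs m k t) x sequentially)}"

end

theory Submission imports Defs begin

lemma e00_nonneg: "0 \<le> e00 s" by (simp add: e00_def)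
lemma e00_le: "e00 s \<le> 1/2" by (simp add: e00_def max_def min_def)
lemma e00_nz: "e00 s \<noteq> 0 \<Longrightarrow> 0 < s \<and> s < 1" by (auto simp: e00_def max_def min_def split: if_splits)

definition rr :: real where "rr = 2 powr (-1/2)"

lemma rr_pow: "2 powr (- real m / 2) = rr ^ m"
  unfolding rr_def by (simp add: powr_realpow[symmetric] powr_powr)

lemma rr_pos: "0 < rr" and rr_lt1: "rr < 1"
  unfolding rr_def by (auto intro!: powr_less_one)

lemma fs_nonneg: "0 \<le> fs m k t" by (simp add: fs_def e00_nonneg)
lemma fs_le: "fs m k t \<le> rr ^ m / 2"
  unfolding fs_def rr_pow using e00_le[of "2 ^ m * t - real_of_int k"] rr_pos
  by (simp add: mult_left_mono)

lemma fs_zero: "k \<noteq> \<lfloor>2 ^ m * t\<rfloor> \<Longrightarrow> fs m k t = 0"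
proof (rule ccontr)
  assume k: "k \<noteq> \<lfloor>2 ^ m * t\<rfloor>" and "fs m k t \<noteq> 0"
  then have "e00 (2 ^ m * t - real_of_int k) \<noteq> 0" by (simp add: fs_def)
  from e00_nz[OF this] have "real_of_int k < 2^m*t" "2^m*t < real_of_int k + 1" by auto
  then have "\<lfloor>2 ^ m * t\<rfloor> = k" by linarith
  with k show False by simp
qed

lemma g_bound:
  assumes "\<And>k. \<bar>c k\<bar> \<le> 1"
  shows "\<bar>\<Sum>k\<in>A. c k * fs m k t\<bar> \<le> rr ^ m / 2"
proof -
  define k0 where "k0 = \<lfloor>2 ^ m * t\<rfloor>"
  have "\<bar>\<Sum>k\<in>A. c k * fs m k t\<bar> \<le> (\<Sum>k\<in>A. \<bar>c k * fs m k t\<bar>)" by (rule sum_abs)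
  also have "\<dots> \<le> (\<Sum>k\<in>A. if k = k0 then rr ^ m / 2 else 0)"
  proof (rule sum_mono)
    fix k assume "k \<in> A"
    show "\<bar>c k * fs m k t\<bar> \<le> (if k = k0 then rr ^ m / 2 else 0)"
    proof (cases "k = k0")
      case True
      have "\<bar>c k * fs m k t\<bar> = \<bar>c k\<bar> * fs m k t" using fs_nonneg by (simp add: abs_mult)
      also have "\<dots> \<le> 1 * (rr ^ m / 2)" using assms[of k] fs_le fs_nonneg by (intro mult_mono) auto
      finally show ?thesis using True by simp
    next
      case False then show ?thesis using fs_zero k0_def by simp
    qed
  qed
  also have "\<dots> \<le> rr ^ m / 2" using rr_pos
    by (cases "finite A") (auto simp: sum.delta)
  finally show ?thesis .
qed


definition gg :: "(nat \<times> int \<Rightarrow> real) \<Rightarrow> nat \<Rightarrow> real \<Rightarrow> real" where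
  "gg \<phi> m t = (\<Sum>k\<in>{0..<2 ^ m}. \<phi> (m, k) * fs m k t)"

definition FF :: "(nat \<times> int \<Rightarrow> real) \<Rightarrow> real \<Rightarrow> real" where
  "FF \<phi> = restrict (\<lambda>t. \<Sum>m. gg \<phi> m t) {0..1}"

definition Kset :: "(nat \<times> int \<Rightarrow> real) set" where
  "Kset = {\<phi>. \<forall>i. \<phi> i \<in> {-1, 1}}"

lemma gg_bound: "(\<And>i. \<bar>\<phi> i\<bar> \<le> 1) \<Longrightarrow> \<bar>gg \<phi> m t\<bar> \<le> rr ^ m / 2"
  unfolding gg_def by (rule g_bound) auto

lemma summable_M: "summable (\<lambda>m. rr ^ m / 2)"
  using rr_pos rr_lt1 by (intro summable_divide summable_geometric) auto

lemma summable_gg: assumes "\<And>i. \<bar>\<phi> i\<bar> \<le> 1" shows "summable (\<lambda>m. gg \<phi> m t)"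
proof (rule summable_comparison_test[OF _ summable_M], rule exI[of _ 0], intro allI impI)
  fix n show "norm (gg \<phi> n t) \<le> rr ^ n / 2" using gg_bound[OF assms] by simp
qed

lemma unif_FF:
  assumes "\<And>i. \<bar>\<phi> i\<bar> \<le> 1"
  shows "uniform_limit {0..1} (\<lambda>n t. \<Sum>m<n. gg \<phi> m t) (FF \<phi>) sequentially"
proof -
  have "uniform_limit {0..1} (\<lambda>n t. \<Sum>m<n. gg \<phi> m t) (\<lambda>t. \<Sum>m. gg \<phi> m t) sequentially"
    by (rule Weierstrass_m_test[OF _ summable_M]) (use gg_bound assms in auto)
  then show ?thesis
    by (subst uniform_limit_cong'[where g="\<lambda>n t. \<Sum>m<n. gg \<phi> m t" and i="\<lambda>t. \<Sum>m. gg \<phi> m t"]) (auto simp: FF_def)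
qed

lemma cont_gg: "continuous_on S (gg \<phi> m)"
  unfolding gg_def fs_def e00_def by (intro continuous_intros)

lemma cont_FF: "(\<And>i. \<bar>\<phi> i\<bar> \<le> 1) \<Longrightarrow> continuous_on {0..1} (FF \<phi>)"
  by (rule uniform_limit_theorem[OF _ unif_FF]) (auto intro!: always_eventually continuous_intros cont_gg)

lemma FF_in: assumes "\<And>i. \<bar>\<phi> i\<bar> \<le> 1" shows "FF \<phi> \<in> mspace C01"
proof -
  have c: "continuous_on {0..1} (FF \<phi>)" by (rule cont_FF[OF assms])
  then have "bounded (FF \<phi> ` {0..1})" by (intro compact_imp_bounded compact_continuous_image) auto
  moreover have "FF \<phi> \<in> extensional {0..1}" by (simp add: FF_def)
  ultimately show ?thesis using c unfolding C01_def by simp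
qed

lemma FF_diff:
  assumes "\<And>i. \<bar>\<phi> i\<bar> \<le> 1" "\<And>i. \<bar>\<psi> i\<bar> \<le> 1" "\<And>m t. m < N \<Longrightarrow> gg \<phi> m t = gg \<psi> m t"
  and t: "t \<in> {0..1}"
  shows "\<bar>FF \<phi> t - FF \<psi> t\<bar> \<le> rr ^ N / (1 - rr)"
proof -
  define b where "b m = (if m < N then 0 else rr ^ m)" for m
  have "(\<lambda>i. b (i + N)) = (\<lambda>i. rr ^ N * rr ^ i)" by (auto simp: b_def power_add fun_eq_iff)
  moreover have "(\<lambda>i. rr ^ N * rr ^ i) sums (rr ^ N * (1 / (1 - rr)))"
    using rr_pos rr_lt1 by (intro sums_mult geometric_sums) auto
  ultimately have "(\<lambda>i. b (i + N)) sums (rr ^ N / (1 - rr))" by simp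
  then have "b sums (rr ^ N / (1 - rr) + (\<Sum>i<N. b i))" by (simp only: sums_iff_shift)
  then have bs: "b sums (rr ^ N / (1 - rr))" by (simp add: b_def)
  have hb: "\<bar>gg \<phi> m t - gg \<psi> m t\<bar> \<le> b m" for m
  proof (cases "m < N")
    case True then show ?thesis using assms(3) by (simp add: b_def)
  next
    case False
    have "\<bar>gg \<phi> m t - gg \<psi> m t\<bar> \<le> \<bar>gg \<phi> m t\<bar> + \<bar>gg \<psi> m t\<bar>" by simp
    also have "\<dots> \<le> rr ^ m / 2 + rr ^ m / 2" using gg_bound assms(1,2) by (intro add_mono) auto
    finally show ?thesis using False by (simp add: b_def)
  qed
  have s1: "summable (\<lambda>m. gg \<phi> m t)" "summable (\<lambda>m. gg \<psi> m t)" using summable_gg assms by auto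
  have "FF \<phi> t - FF \<psi> t = (\<Sum>m. gg \<phi> m t - gg \<psi> m t)"
    using t s1 by (simp add: FF_def suminf_diff)
  also have "\<bar>\<dots>\<bar> \<le> (\<Sum>m. \<bar>gg \<phi> m t - gg \<psi> m t\<bar>)"
    by (rule summable_rabs, rule summable_comparison_test[OF _ sums_summable[OF bs]])
       (use hb in auto)
  also have "\<dots> \<le> (\<Sum>m. b m)"
    by (rule suminf_le[OF hb summable_comparison_test[OF _ sums_summable[OF bs]] sums_summable[OF bs]])
       (use hb in auto)
  also have "\<dots> = rr ^ N / (1 - rr)" using bs by (simp add: sums_iff)
  finally show ?thesis .
qed


lemma Kset_bound: assumes "\<phi> \<in> Kset" shows "\<bar>\<phi> i\<bar> \<le> 1"
proof -
  have "\<phi> i \<in> {-1,1}" using assms unfolding Kset_def by blast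
  then show ?thesis by auto
qed

lemma Kset_PiE: "Kset = PiE UNIV (\<lambda>_. {-1, 1})"
  unfolding Kset_def by (auto simp: PiE_UNIV_domain)

lemma cont_map:
  "continuous_map (subtopology (product_topology (\<lambda>_. euclideanreal) UNIV) Kset) (mtopology_of C01) FF"
  unfolding mtopology_of_def
proof (subst Metric_space.continuous_map_to_metric[OF Metric_space_mspace_mdist], intro ballI allI impI)
  fix \<phi>0 and \<epsilon> :: real
  assume "\<phi>0 \<in> topspace (subtopology (product_topology (\<lambda>_. euclideanreal) UNIV) Kset)" and e: "0 < \<epsilon>"
  then have K0: "\<phi>0 \<in> Kset" by simp
  have "0 < \<epsilon> * (1 - rr)" using e rr_lt1 by simp
  then obtain N where N: "rr ^ N < \<epsilon> * (1 - rr)" using real_arch_pow_inv rr_lt1 by blast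
  define P where "P = {(m, k::int). m < N \<and> 0 \<le> k \<and> k < 2 ^ m}"
  have "P \<subseteq> {..<N} \<times> {0..<2 ^ N}"
  proof
    fix i assume "i \<in> P"
    then obtain m k where i: "i = (m, k)" "m < N" "0 \<le> k" "k < (2::int) ^ m" by (auto simp: P_def)
    have "(2::int) ^ m \<le> 2 ^ N" using i(2) by (intro power_increasing) auto
    then have "k < 2 ^ N" using i(4) by linarith
    then show "i \<in> {..<N} \<times> {0..<2 ^ N}" using i by auto
  qed
  then have finP: "finite P" by (rule finite_subset) auto
  define S where "S i = (if i \<in> P then ball (\<phi>0 i) 1 else UNIV)" for i
  define V where "V = PiE UNIV S"
  have "{i \<in> UNIV. S i \<noteq> topspace euclideanreal} \<subseteq> P" by (auto simp: S_def)
  then have "openin (product_topology (\<lambda>_. euclideanreal) UNIV) V"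
    unfolding V_def openin_PiE_gen using finP by (auto intro: finite_subset simp: S_def)
  then have opU: "openin (subtopology (product_topology (\<lambda>_. euclideanreal) UNIV) Kset) (V \<inter> Kset)"
    by (auto simp: openin_subtopology)
  have inU: "\<phi>0 \<in> V \<inter> Kset" using K0 by (auto simp: V_def S_def PiE_UNIV_domain)
  have "\<forall>\<phi>\<in>V \<inter> Kset. FF \<phi> \<in> Metric_space.mball (mspace C01) (mdist C01) (FF \<phi>0) \<epsilon>"
  proof
    fix \<phi> assume \<phi>: "\<phi> \<in> V \<inter> Kset"
    have eq: "\<phi> i = \<phi>0 i" if "i \<in> P" for i
    proof -
      have "\<phi> i \<in> S i" using \<phi> by (auto simp: V_def PiE_UNIV_domain)
      then have "\<bar>\<phi> i - \<phi>0 i\<bar> < 1" using that by (auto simp: S_def dist_real_def)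
      moreover have "\<phi> i \<in> {-1,1}" "\<phi>0 i \<in> {-1,1}" using \<phi> K0 unfolding Kset_def by blast+
      ultimately show ?thesis by auto
    qed
    have gq: "gg \<phi>0 m t = gg \<phi> m t" if "m < N" for m t
      unfolding gg_def by (rule sum.cong) (use eq that in \<open>auto simp: P_def\<close>)
    have hK: "\<phi> \<in> Kset" using \<phi> by blast
    have B: "rr ^ N / (1 - rr) < \<epsilon>" using N rr_lt1 by (simp add: divide_less_eq)
    have "mdist C01 (FF \<phi>0) (FF \<phi>) \<le> rr ^ N / (1 - rr)"
      unfolding C01_def
      by (rule mdist_cfunspace_le) (use rr_pos rr_lt1 FF_diff[of \<phi>0 \<phi> N, OF Kset_bound[OF K0] Kset_bound[OF hK] gq] \<phi> in \<open>auto simp: dist_real_def\<close>)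
    then show "FF \<phi> \<in> Metric_space.mball (mspace C01) (mdist C01) (FF \<phi>0) \<epsilon>"
      using B FF_in Kset_bound K0 \<phi>
      by (simp add: Metric_space.in_mball[OF Metric_space_mspace_mdist])
  qed
  then show "\<exists>U. openin (subtopology (product_topology (\<lambda>_. euclideanreal) UNIV) Kset) U \<and> \<phi>0 \<in> U \<and>
          (\<forall>y\<in>U. FF y \<in> Metric_space.mball (mspace C01) (mdist C01) (FF \<phi>0) \<epsilon>)"
    using opU inU by blast
qed


lemma scrX_eq: "scrX = FF ` Kset"
proof
  show "FF ` Kset \<subseteq> scrX"
  proof
    fix x assume "x \<in> FF ` Kset"
    then obtain \<phi> where \<phi>: "\<phi> \<in> Kset" and x: "x = FF \<phi>" by blast
    define \<theta> where "\<theta> = (\<lambda>m k. \<phi> (m, k))"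
    have e: "x \<in> extensional {0..1}" by (simp add: x FF_def)
    have c: "continuous_on {0..1} x" unfolding x by (rule cont_FF[OF Kset_bound[OF \<phi>]])
    have th: "\<forall>m k. 0 \<le> k \<and> k < 2 ^ m \<longrightarrow> \<theta> m k \<in> {-1, 1}"
    proof (intro allI impI)
      fix m k show "\<theta> m k \<in> {-1, 1}" using \<phi> unfolding Kset_def \<theta>_def by blast
    qed
    have u: "uniform_limit {0..1}
          (\<lambda>n t. \<Sum>m<n. \<Sum>k\<in>{0..<2 ^ m}. \<theta> m k * fs m k t) x sequentially"
      using unif_FF[OF Kset_bound[OF \<phi>]] unfolding x gg_def \<theta>_def .
    show "x \<in> scrX" unfolding scrX_def
      by (rule CollectI, intro conjI e c exI[of _ \<theta>] th u)
  qed
next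
  show "scrX \<subseteq> FF ` Kset"
  proof
    fix x assume "x \<in> scrX"
    then have ext: "x \<in> extensional {0..1}" and
      ex: "\<exists>\<theta> :: nat \<Rightarrow> int \<Rightarrow> real.
        (\<forall>m k. 0 \<le> k \<and> k < 2 ^ m \<longrightarrow> \<theta> m k \<in> {-1, 1}) \<and>
        uniform_limit {0..1}
          (\<lambda>n t. \<Sum>m<n. \<Sum>k\<in>{0..<2 ^ m}. \<theta> m k * fs m k t) x sequentially"
      unfolding scrX_def by simp_all
    from ex obtain \<theta> :: "nat \<Rightarrow> int \<Rightarrow> real" where
      thul: "(\<forall>m k. 0 \<le> k \<and> k < 2 ^ m \<longrightarrow> \<theta> m k \<in> {-1, 1}) \<and>
        uniform_limit {0..1}
          (\<lambda>n t. \<Sum>m<n. \<Sum>k\<in>{0..<2 ^ m}. \<theta> m k * fs m k t) x sequentially" ..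
    from thul have th: "\<forall>m k. 0 \<le> k \<and> k < 2 ^ m \<longrightarrow> \<theta> m k \<in> {-1, 1}" ..
    from thul have ul: "uniform_limit {0..1}
          (\<lambda>n t. \<Sum>m<n. \<Sum>k\<in>{0..<2 ^ m}. \<theta> m k * fs m k t) x sequentially" ..
    define \<phi> where "\<phi> = (\<lambda>(m, k). if 0 \<le> k \<and> k < 2 ^ m then \<theta> m k else (1::real))"
    have K: "\<phi> \<in> Kset" unfolding Kset_def
    proof (intro CollectI allI)
      fix i :: "nat \<times> int" obtain m k where i: "i = (m, k)" by fastforce
      show "\<phi> i \<in> {-1, 1}" using th by (simp add: i \<phi>_def)
    qed
    have "(\<Sum>k\<in>{0..<2 ^ m}. \<theta> m k * fs m k t) = gg \<phi> m t" for m t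
      unfolding gg_def by (rule sum.cong) (simp_all add: \<phi>_def)
    then have ul2: "uniform_limit {0..1} (\<lambda>n t. \<Sum>m<n. gg \<phi> m t) x sequentially" using ul by simp
    have "x = FF \<phi>"
    proof (rule extensionalityI[OF ext])
      show "FF \<phi> \<in> extensional {0..1}" by (simp add: FF_def)
      fix t :: real assume t: "t \<in> {0..1}"
      show "x t = FF \<phi> t"
        using tendsto_uniform_limitI[OF ul2 t] tendsto_uniform_limitI[OF unif_FF[OF Kset_bound[OF K]] t]
        by (rule LIMSEQ_unique)
    qed
    then show "x \<in> FF ` Kset" using K by blast
  qed
qed

theorem corollary2p5:
  shows "compactin (mtopology_of C01) scrX"
proof -
  have "compactin (product_topology (\<lambda>_. euclideanreal) UNIV) Kset"
    unfolding Kset_PiE compactin_PiE by (auto intro: finite_imp_compactin)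
  then have "compactin (subtopology (product_topology (\<lambda>_. euclideanreal) UNIV) Kset) Kset"
    by (simp add: compactin_subtopology)
  from image_compactin[OF this cont_map] show ?thesis by (simp add: scrX_eq)
qed

end
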